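(* Let $X$ be a nonempty set, $f:X\to X$ a function, and $\tau_2$ the fuzzy topology on $X$ defined below. Then $(X,\tau_2)$ is normal.
   Context: A fuzzy subset of $X$ is a function $\mu:X\to[0,1]$; union is the pointwise supremum, intersection the pointwise minimum, complement $1-\mu$; $\emptyset$ is the constant $0$ and $X$ the constant $1$. A fuzzy topology is a family of fuzzy subsets containing $\emptyset$ and $X$, closed under arbitrary unions and finite intersections; complements of open fuzzy sets are closed; the topology generated by a base $\mathbb{B}$ consists of $\emptyset$ and all unions of subfamilies of $\mathbb{B}$. $\mathbb{N}=\{1,2,\dots\}$, $f^0=\mathrm{id}_X$, $f^{n+1}=f^n\circ f$. Definition of $\tau_2$: $J_0=\bigcap_{n\in\mathbb{N}} f^n(X)$, $J_n=f^{n-1}(X)\setminus f^n(X)$ for $n\in\mathbb{N}$; for $m\in\mathbb{N}$, $\mu_{K_m}(x)=\min\{1,n/m\}$ if $x\in J_n$ with $n\ge1$, and $\mu_{K_m}(x)=1$ otherwise; $\tau_2$ is generated by the base $\{K_m:m\in\mathbb{N}\}$. The space is normal if for any two closed fuzzy sets $F,G$ with $F\cap G=\emptyset$ there exist open fuzzy sets $U,V$ with $F\subseteq U$, $G\subseteq V$ and $U\cap V=\emptyset$. *)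

theory Defs
  imports Complex_Main
begin

text \<open>Fuzzy subsets of the carrier (the whole type 'a) are functions 'a => real
  (with values in [0,1]). Union = pointwise supremum, intersection = pointwise min.\<close>

type_synonym 'a fuzzy = "'a \<Rightarrow> real"

definition fuzzy_Union :: "'a fuzzy set \<Rightarrow> 'a fuzzy" where
  "fuzzy_Union S = (\<lambda>x. SUP \<mu>\<in>S. \<mu> x)"

definition fuzzy_inter :: "'a fuzzy \<Rightarrow> 'a fuzzy \<Rightarrow> 'a fuzzy" where
  "fuzzy_inter \<mu> \<nu> = (\<lambda>x. min (\<mu> x) (\<nu> x))"

definition fuzzy_compl :: "'a fuzzy \<Rightarrow> 'a fuzzy" where
  "fuzzy_compl \<mu> = (\<lambda>x. 1 - \<mu> x)"

definition fuzzy_empty :: "'a fuzzy" where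
  "fuzzy_empty = (\<lambda>x. 0)"

definition fuzzy_subset :: "'a fuzzy \<Rightarrow> 'a fuzzy \<Rightarrow> bool" where
  "fuzzy_subset \<mu> \<nu> \<longleftrightarrow> (\<forall>x. \<mu> x \<le> \<nu> x)"

text \<open>Topology generated by a base: the empty fuzzy set together with all unions of
  (nonempty) subfamilies of the base; the union of the empty subfamily is the empty
  fuzzy set, which is included explicitly.\<close>
definition generated_fuzzy_topology :: "'a fuzzy set \<Rightarrow> 'a fuzzy set" where
  "generated_fuzzy_topology B =
     insert fuzzy_empty {fuzzy_Union S | S. S \<subseteq> B \<and> S \<noteq> {}}"

definition fuzzy_closed :: "'a fuzzy set \<Rightarrow> 'a fuzzy \<Rightarrow> bool" where
  "fuzzy_closed T F \<longleftrightarrow> fuzzy_compl F \<in> T"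

definition fuzzy_normal :: "'a fuzzy set \<Rightarrow> bool" where
  "fuzzy_normal T \<longleftrightarrow>
    (\<forall>F G. fuzzy_closed T F \<and> fuzzy_closed T G \<and> fuzzy_inter F G = fuzzy_empty \<longrightarrow>
      (\<exists>U V. U \<in> T \<and> V \<in> T \<and> fuzzy_subset F U \<and> fuzzy_subset G V \<and>
             fuzzy_inter U V = fuzzy_empty))"

definition J0 :: "('a \<Rightarrow> 'a) \<Rightarrow> 'a set" where
  "J0 f = (\<Inter>n\<in>{1..}. range (f ^^ n))"

definition J :: "('a \<Rightarrow> 'a) \<Rightarrow> nat \<Rightarrow> 'a set" where
  "J f n = range (f ^^ (n - 1)) - range (f ^^ n)"

text \<open>K_m(x) = min 1 (n/m) if x lies in J_n with n >= 1, and 1 otherwise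
  (the J_n are pairwise disjoint, so n is unique).\<close>
definition K :: "('a \<Rightarrow> 'a) \<Rightarrow> nat \<Rightarrow> 'a fuzzy" where
  "K f m = (\<lambda>x. if \<exists>n\<ge>1. x \<in> J f n
                 then min 1 (real (THE n. n \<ge> 1 \<and> x \<in> J f n) / real m)
                 else 1)"

definition tau2 :: "('a \<Rightarrow> 'a) \<Rightarrow> 'a fuzzy set" where
  "tau2 f = generated_fuzzy_topology (K f ` {1..})"

end

theory Submission
  imports Defs
begin

lemma range_funpow_mono:
  fixes f :: "'a \<Rightarrow> 'a"
  assumes "k \<le> n" shows "range (f ^^ n) \<subseteq> range (f ^^ k)"
  using assms
proof (induction n rule: dec_induct)
  case base then show ?case by simp
next
  case (step n)
  have "range (f ^^ Suc n) \<subseteq> range (f ^^ n)"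
  proof
    fix y assume "y \<in> range (f ^^ Suc n)"
    then obtain z where "y = (f ^^ Suc n) z" by auto
    then have "y = (f ^^ n) (f z)" by (simp only: funpow_Suc_right comp_apply)
    then show "y \<in> range (f ^^ n)" by simp
  qed
  with step show ?case by blast
qed

lemma J_unique:
  assumes "1 \<le> n" "1 \<le> n'" "x \<in> J f n" "x \<in> J f n'" shows "n = n'"
proof (rule ccontr)
  assume "n \<noteq> n'"
  then consider "n < n'" | "n' < n" by linarith
  then show False
  proof cases
    case 1
    then have "range (f ^^ (n' - 1)) \<subseteq> range (f ^^ n)" by (intro range_funpow_mono) simp
    moreover have "x \<in> range (f ^^ (n' - 1))" "x \<notin> range (f ^^ n)" using assms(3,4) unfolding J_def by auto
    ultimately show False by auto
  next
    case 2
    then have "range (f ^^ (n - 1)) \<subseteq> range (f ^^ n')" by (intro range_funpow_mono) simp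
    moreover have "x \<in> range (f ^^ (n - 1))" "x \<notin> range (f ^^ n')" using assms(3,4) unfolding J_def by auto
    ultimately show False by auto
  qed
qed

lemma K1: "K f 1 x = 1"
proof (cases "\<exists>n\<ge>1. x \<in> J f n")
  case True
  then obtain n where n: "n \<ge> 1" "x \<in> J f n" by blast
  have "(THE n. n \<ge> 1 \<and> x \<in> J f n) = n"
    by (rule the_equality) (use n J_unique in auto)
  with True n show ?thesis unfolding K_def by simp
next
  case False then show ?thesis unfolding K_def by auto
qed

lemma K_anti: assumes "1 \<le> a" "a \<le> b" shows "K f b x \<le> K f a x"
proof -
  have "real t / real b \<le> real t / real a" for t
    using assms by (intro divide_left_mono) auto
  then have "min 1 (real t / real b) \<le> min 1 (real t / real a)" for t
    by (rule min.mono[OF order.refl])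
  then show ?thesis unfolding K_def by simp
qed

lemma K_nonneg: "0 \<le> K f m x"
  unfolding K_def by auto

lemma open_form:
  assumes "U \<in> tau2 f"
  shows "U = fuzzy_empty \<or> (\<exists>a\<ge>1. U = K f a)"
proof -
  have "U = fuzzy_empty \<or> (\<exists>S. U = fuzzy_Union S \<and> S \<subseteq> K f ` {1..} \<and> S \<noteq> {})"
    using assms unfolding tau2_def generated_fuzzy_topology_def by blast
  moreover
  {
    fix S assume U: "U = fuzzy_Union S" and S: "S \<subseteq> K f ` {1..}" "S \<noteq> {}"
    define M where "M = {m. m \<ge> 1 \<and> K f m \<in> S}"
    have "M \<noteq> {}" using S unfolding M_def by auto
    define a where "a = Least (\<lambda>m. m \<in> M)"
    have aM: "a \<in> M" unfolding a_def using \<open>M \<noteq> {}\<close> by (auto intro: LeastI)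
    have amin: "m \<in> M \<Longrightarrow> a \<le> m" for m unfolding a_def by (rule Least_le)
    have "U = K f a"
    proof
      fix x
      have "(SUP \<mu>\<in>S. \<mu> x) = K f a x"
      proof (rule cSup_eq_maximum)
        show "K f a x \<in> (\<lambda>\<mu>. \<mu> x) ` S" using aM unfolding M_def by auto
      next
        fix y assume "y \<in> (\<lambda>\<mu>. \<mu> x) ` S"
        then obtain \<mu> where "\<mu> \<in> S" "y = \<mu> x" by auto
        with S obtain m where "m \<ge> 1" "\<mu> = K f m" by auto
        then have "m \<in> M" using \<open>\<mu> \<in> S\<close> unfolding M_def by auto
        then show "y \<le> K f a x" using \<open>y = \<mu> x\<close> \<open>\<mu> = K f m\<close> amin aM
          unfolding M_def by (auto intro: K_anti)
      qed
      then show "U x = K f a x" unfolding U fuzzy_Union_def by simp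
    qed
    then have "\<exists>a\<ge>1. U = K f a" using aM unfolding M_def by auto
  }
  ultimately show ?thesis by blast
qed

lemma K_in: "1 \<le> a \<Longrightarrow> K f a \<in> tau2 f"
  unfolding tau2_def generated_fuzzy_topology_def
proof -
  assume "1 \<le> a"
  have "fuzzy_Union {K f a} = K f a" unfolding fuzzy_Union_def by simp
  then show "K f a \<in> insert fuzzy_empty {fuzzy_Union S |S. S \<subseteq> K f ` {1..} \<and> S \<noteq> {}}"
    using \<open>1 \<le> a\<close> by (intro insertI2 CollectI exI[of _ "{K f a}"]) auto
qed

lemma empty_in: "fuzzy_empty \<in> tau2 f"
  unfolding tau2_def generated_fuzzy_topology_def by simp

lemma closed_zero:
  assumes F: "fuzzy_closed (tau2 f) F" and G: "fuzzy_closed (tau2 f) G"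
    and FG: "fuzzy_inter F G = fuzzy_empty"
  shows "F = fuzzy_empty \<or> G = fuzzy_empty"
proof -
  have mz: "min (F x) (G x) = 0" for x
    using fun_cong[OF FG, of x] unfolding fuzzy_inter_def fuzzy_empty_def by simp
  have Fc: "F x = 1 - fuzzy_compl F x" "G x = 1 - fuzzy_compl G x" for x
    unfolding fuzzy_compl_def by simp_all
  have cF: "fuzzy_compl F = fuzzy_empty \<or> (\<exists>a\<ge>1. fuzzy_compl F = K f a)"
    using open_form F unfolding fuzzy_closed_def by blast
  have cG: "fuzzy_compl G = fuzzy_empty \<or> (\<exists>a\<ge>1. fuzzy_compl G = K f a)"
    using open_form G unfolding fuzzy_closed_def by blast
  show ?thesis
  proof (cases "fuzzy_compl F = fuzzy_empty")
    case True
    then have F1: "F x = 1" for x using Fc(1)[of x] unfolding fuzzy_empty_def by simp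
    have "G = fuzzy_empty" unfolding fuzzy_empty_def
    proof
      fix x show "G x = 0" using mz[of x] F1[of x] by (auto simp: min_def split: if_splits)
    qed
    then show ?thesis ..
  next
    case nF: False
    show ?thesis
    proof (cases "fuzzy_compl G = fuzzy_empty")
      case True
      then have G1: "G x = 1" for x using Fc(2)[of x] unfolding fuzzy_empty_def by simp
      have "F = fuzzy_empty" unfolding fuzzy_empty_def
      proof
        fix x show "F x = 0" using mz[of x] G1[of x] by (auto simp: min_def split: if_splits)
      qed
      then show ?thesis ..
    next
      case False
      from nF cF obtain a where a: "1 \<le> a" "fuzzy_compl F = K f a" by blast
      from False cG obtain b where b: "1 \<le> b" "fuzzy_compl G = K f b" by blast
      show ?thesis
      proof (cases "a \<le> b")
        case True
        have le: "F x \<le> G x" for x using Fc[of x] a b K_anti[OF a(1) True, where f=f and x=x] by simp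
        have "F = fuzzy_empty" unfolding fuzzy_empty_def
        proof
          fix x show "F x = 0" using mz[of x] le[of x] by (auto simp: min_def split: if_splits)
        qed
        then show ?thesis ..
      next
        case False
        have le: "G x \<le> F x" for x using Fc[of x] a b K_anti[OF b(1), where b=a and f=f and x=x] False by simp
        have "G = fuzzy_empty" unfolding fuzzy_empty_def
        proof
          fix x show "G x = 0" using mz[of x] le[of x] by (auto simp: min_def split: if_splits)
        qed
        then show ?thesis ..
      qed
    qed
  qed
qed

lemma closed_le1:
  assumes "fuzzy_closed (tau2 f) F" shows "F x \<le> 1"
proof -
  have "F x = 1 - fuzzy_compl F x" unfolding fuzzy_compl_def by simp
  with open_form[OF assms[unfolded fuzzy_closed_def]] show ?thesis
    using K_nonneg unfolding fuzzy_empty_def by auto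
qed

theorem proposition3p11:
  fixes f :: "'a \<Rightarrow> 'a"
  shows "fuzzy_normal (tau2 f)"
  unfolding fuzzy_normal_def
proof (intro allI impI, elim conjE)
  fix F G assume F: "fuzzy_closed (tau2 f) F" and G: "fuzzy_closed (tau2 f) G"
    and FG: "fuzzy_inter F G = fuzzy_empty"
  have K1': "K f 1 = (\<lambda>x. 1)" by (rule ext) (rule K1)
  have i1: "K f 1 \<in> tau2 f" by (rule K_in) simp
  from closed_zero[OF F G FG] show "\<exists>U V. U \<in> tau2 f \<and> V \<in> tau2 f \<and> fuzzy_subset F U \<and>
      fuzzy_subset G V \<and> fuzzy_inter U V = fuzzy_empty"
  proof
    assume FE: "F = fuzzy_empty"
    show ?thesis
      apply (rule exI[of _ fuzzy_empty], rule exI[of _ "K f 1"], intro conjI)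
      using FE empty_in i1 closed_le1[OF G]
        by (auto simp: fuzzy_subset_def fuzzy_inter_def fuzzy_empty_def K1[simplified])
  next
    assume GE: "G = fuzzy_empty"
    show ?thesis
      apply (rule exI[of _ "K f 1"], rule exI[of _ fuzzy_empty], intro conjI)
      using GE empty_in i1 closed_le1[OF F]
        by (auto simp: fuzzy_subset_def fuzzy_inter_def fuzzy_empty_def K1[simplified])
  qed
qed

end
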